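(* For every $0<\sigma<1$ and every integer $n\ge1$, $$\sum_{j=0}^n\sigma^{\sqrt{j}+\sqrt{n-j}-\sqrt{n}}\le\frac{20}{(1-\sigma)^2}.$$ *)

theory Defs
  imports Complex_Main
begin

end

theory Submission
  imports Defs
begin

lemma geo_closed:
  fixes t :: real
  assumes "t \<noteq> 1"
  shows "(\<Sum>m<M. (2*real m+1) * t^m) * (1-t)^2 = 1 + t - t^M * ((2*real M+1) - (2*real M-1)*t)"
proof (induction M)
  case 0 then show ?case by simp
next
  case (Suc M)
  have "(\<Sum>m<Suc M. (2*real m+1) * t^m) * (1-t)^2
      = (\<Sum>m<M. (2*real m+1) * t^m) * (1-t)^2 + (2*real M+1) * t^M * (1-t)^2"
    by (simp add: algebra_simps)
  also have "\<dots> = 1 + t - t^Suc M * ((2*real (Suc M)+1) - (2*real (Suc M)-1)*t)"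
    using Suc by (simp add: algebra_simps power2_eq_square)
  finally show ?case .
qed

lemma geo_bound:
  fixes t :: real
  assumes "0 \<le> t" "t < 1"
  shows "(\<Sum>m<M. (2*real m+1) * t^m) \<le> 2 / (1-t)^2"
proof -
  have pos: "(1-t)^2 > 0" using assms by simp
  have "t^M * ((2*real M+1) - (2*real M-1)*t) \<ge> 0"
  proof -
    have "(2*real M-1)*t \<le> (2*real M+1)"
    proof (cases "M = 0")
      case True then show ?thesis using assms by simp
    next
      case False
      then have "2*real M - 1 \<ge> 0" by simp
      then have "(2*real M-1)*t \<le> (2*real M-1)*1" using assms by (intro mult_left_mono) auto
      then show ?thesis by simp
    qed
    then show ?thesis using assms by simp
  qed
  then have "(\<Sum>m<M. (2*real m+1) * t^m) * (1-t)^2 \<le> 2"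
    using geo_closed[of t M] assms by simp
  then show ?thesis using pos by (simp add: field_simps)
qed

lemma block_bound:
  fixes \<sigma> :: real
  assumes "0 < \<sigma>" "\<sigma> < 1"
  shows "(\<Sum>j<M^2. \<sigma> powr (sqrt (real j) / 2)) \<le> (\<Sum>m<M. (2*real m+1) * (sqrt \<sigma>)^m)"
proof (induction M)
  case 0 then show ?case by simp
next
  case (Suc M)
  have split: "(\<Sum>j<(Suc M)^2. \<sigma> powr (sqrt (real j) / 2))
     = (\<Sum>j<M^2. \<sigma> powr (sqrt (real j) / 2)) + (\<Sum>j\<in>{M^2..<(Suc M)^2}. \<sigma> powr (sqrt (real j) / 2))"
  proof -
    have "M^2 \<le> (Suc M)^2" by (simp add: power_mono)
    then show ?thesis
      using sum.atLeastLessThan_concat[of 0 "M^2" "(Suc M)^2" "\<lambda>j. \<sigma> powr (sqrt (real j) / 2)"]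
      by (simp add: atLeast0LessThan)
  qed
  have "(\<Sum>j\<in>{M^2..<(Suc M)^2}. \<sigma> powr (sqrt (real j) / 2))
        \<le> of_nat (card {M^2..<(Suc M)^2}) * (sqrt \<sigma>)^M"
  proof (rule sum_bounded_above)
    fix j assume "j \<in> {M^2..<(Suc M)^2}"
    then have "real M ^ 2 \<le> real j" by (simp del: of_nat_power add: of_nat_power[symmetric])
    then have "real M \<le> sqrt (real j)" using real_le_rsqrt by blast
    then have "\<sigma> powr (sqrt (real j) / 2) \<le> \<sigma> powr (real M / 2)"
      using assms by (intro powr_mono') auto
    also have "\<sigma> powr (real M / 2) = (sqrt \<sigma>)^M"
      using assms by (simp add: powr_half_sqrt[symmetric] powr_power)
    finally show "\<sigma> powr (sqrt (real j) / 2) \<le> (sqrt \<sigma>)^M" .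
  qed
  also have "card {M^2..<(Suc M)^2} = 2*M+1" by (simp add: power2_eq_square)
  finally have "(\<Sum>j\<in>{M^2..<(Suc M)^2}. \<sigma> powr (sqrt (real j) / 2)) \<le> (2*real M+1) * (sqrt \<sigma>)^M"
    by (simp add: add.commute)
  then show ?case using split Suc by simp
qed

theorem lemma5p8:
  fixes \<sigma> :: real and n :: nat
  assumes "0 < \<sigma>" and "\<sigma> < 1" and "n \<ge> 1"
  shows "(\<Sum>j=0..n. \<sigma> powr (sqrt (real j) + sqrt (real (n - j)) - sqrt (real n)))
           \<le> 20 / (1 - \<sigma>)^2"
proof -
  define g where "g = (\<lambda>x::real. \<sigma> powr (sqrt x / 2))"
  have key: "sqrt a + sqrt b - sqrt c \<ge> sqrt a / 2" if "0 \<le> a" "a \<le> b" "c = a + b" for a b c :: real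
  proof -
    define x y where "x = sqrt a" and "y = sqrt b"
    have xy: "0 \<le> x" "x \<le> y" using that by (auto simp: x_def y_def)
    have "c = x^2 + y^2" using that by (simp add: x_def y_def)
    moreover have "sqrt (x^2+y^2) \<le> y + x/2"
    proof (rule real_le_lsqrt)
      have "x*x \<le> x*y" using xy by (intro mult_left_mono) auto
      moreover have "0 \<le> x*x" by simp
      moreover have "(y + x/2)^2 = y*y + x*y + x*x/4" by (simp add: power2_eq_square algebra_simps)
      ultimately show "x^2+y^2 \<le> (y + x/2)^2"
        unfolding power2_eq_square by linarith
    qed (use xy in simp)
    ultimately show ?thesis by (simp add: x_def y_def)
  qed
  have termb: "\<sigma> powr (sqrt (real j) + sqrt (real (n - j)) - sqrt (real n)) \<le> g (real j) + g (real (n-j))"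
    if "j \<in> {0..n}" for j
  proof -
    have nj: "real n = real j + real (n-j)" using that by simp
    have gpos: "g x \<ge> 0" for x by (simp add: g_def)
    show ?thesis
    proof (cases "j \<le> n - j")
      case True
      have "sqrt (real j) + sqrt (real (n - j)) - sqrt (real n) \<ge> sqrt (real j) / 2"
        using key[of "real j" "real (n-j)" "real n", OF _ _ nj] True by simp
      then have "\<sigma> powr (sqrt (real j) + sqrt (real (n - j)) - sqrt (real n)) \<le> g (real j)"
        unfolding g_def using assms by (intro powr_mono') auto
      then show ?thesis using gpos[of "real (n-j)"] by simp
    next
      case False
      have "sqrt (real (n-j)) + sqrt (real j) - sqrt (real n) \<ge> sqrt (real (n-j)) / 2"
        proof -
        have nj2: "real n = real (n-j) + real j" using nj by linarith
        have "real (n-j) \<le> real j" using False by simp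
        then show ?thesis using key[of "real (n-j)" "real j" "real n", OF _ _ nj2] by simp
      qed
      then have "\<sigma> powr (sqrt (real j) + sqrt (real (n - j)) - sqrt (real n)) \<le> g (real (n-j))"
        unfolding g_def using assms by (intro powr_mono') (auto simp: add.commute)
      then show ?thesis using gpos[of "real j"] by simp
    qed
  qed
  have reflS: "(\<Sum>j=0..n. g (real (n-j))) = (\<Sum>j=0..n. g (real j))"
    by (rule sum.reindex_bij_witness[where i="\<lambda>j. n-j" and j="\<lambda>j. n-j"]) auto
  have t: "0 \<le> sqrt \<sigma>" "sqrt \<sigma> < 1" using assms by auto
  have sub: "(\<Sum>j=0..n. g (real j)) \<le> (\<Sum>j<(n+1)^2. g (real j))"
  proof (rule sum_mono2)
    show "{0..n} \<subseteq> {..<(n+1)^2}" by (auto simp: power2_eq_square)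
  qed (auto simp: g_def)
  have "(\<Sum>j<(n+1)^2. g (real j)) \<le> 2 / (1 - sqrt \<sigma>)^2"
    using block_bound[OF assms(1,2), of "n+1"] geo_bound[OF t, of "n+1"] unfolding g_def by linarith
  also have "\<dots> \<le> 8 / (1-\<sigma>)^2"
  proof -
    define r where "r = sqrt \<sigma>"
    have rr: "r * r = \<sigma>" using assms by (simp add: r_def)
    have r: "0 \<le> r" "r < 1" using t by (auto simp: r_def)
    have "1 - \<sigma> = (1 - r) * (1 + r)" using rr by (simp add: algebra_simps)
    also have "\<dots> \<le> (1 - r) * 2" using r by (intro mult_left_mono) auto
    finally have le: "1 - \<sigma> \<le> 2 * (1 - r)" by simp
    have "(1-\<sigma>)^2 \<le> (2 * (1 - r))^2" using le assms by (intro power_mono) auto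
    then have "8 / (2 * (1 - r))^2 \<le> 8 / (1-\<sigma>)^2"
      using assms r by (intro divide_left_mono) (auto intro!: mult_pos_pos)
    moreover have "8 / (2 * (1 - r))^2 = 2 / (1 - r)^2"
    proof -
      have "(2 * (1 - r))^2 = 4 * (1 - r)^2" by (simp only: power_mult_distrib) simp
      then show ?thesis by simp
    qed
    ultimately show ?thesis by (simp add: r_def)
  qed
  finally have G: "(\<Sum>j=0..n. g (real j)) \<le> 8 / (1-\<sigma>)^2" using sub by linarith
  have "(\<Sum>j=0..n. \<sigma> powr (sqrt (real j) + sqrt (real (n - j)) - sqrt (real n)))
        \<le> (\<Sum>j=0..n. g (real j) + g (real (n-j)))" by (rule sum_mono[OF termb])
  also have "\<dots> = 2 * (\<Sum>j=0..n. g (real j))" by (simp only: sum.distrib reflS mult_2)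
  also have "\<dots> \<le> 16 / (1-\<sigma>)^2" using G by simp
  also have "\<dots> \<le> 20 / (1-\<sigma>)^2" using assms by (simp add: divide_right_mono)
  finally show ?thesis .
qed

end
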